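(* Under the standing setup, let $\mathcal S_\dagger\subset\mathbb R^D$ be a finite nonempty anchor set and let $\hat V_\tau(s,l,t)$, for $s\in\mathcal S_\dagger$, $l\in\{0,\dots,k\}$, $t\in\{0,\dots,T-1\}$, be the values computed by the anchor recursion. Then $\hat V_\tau(s,l,t)\ge V_\tau(s,l,t)$ for all such $s,l,t$.
   Context: Standing setup: state space $\mathcal S=\mathbb R^D$, finite action set $\mathcal A$, horizon $T\ge2$, noise space $\mathcal U$. A transition mechanism $g_S:\mathcal S\times\mathcal A\times\mathcal U\to\mathcal S$ is bijective in its last argument, with inverse $g_S^{-1}:\mathcal S\times\mathcal A\times\mathcal S\to\mathcal U$ satisfying $u=g_S^{-1}(s,a,s')$ whenever $s'=g_S(s,a,u)$. Reward $R:\mathcal S\times\mathcal A\to\mathbb R$. Lipschitz assumption: for each $a\in\mathcal A,u\in\mathcal U$ there is $K_{a,u}\ge0$ with $\|g_S(s,a,u)-g_S(s',a,u)\|\le K_{a,u}\|s-s'\|$, and for each $a$ there is $C_a\ge0$ with $|R(s,a)-R(s',a)|\le C_a\|s-s'\|$, for all $s,s'\in\mathcal S$ (Euclidean norm). An observed episode $\tau$ consists of states $s_0,\dots,s_{T-1}$ and actions $a_0,\dots,a_{T-1}$; put $u_t=g_S^{-1}(s_t,a_t,s_{t+1})$ for $t=0,\dots,T-2$. Fix a budget $k\in\{0,\dots,T\}$. For $t\le T-2$ define $F^+_{\tau,t}((s,l),a)=\big(g_S(s,a,u_t),\,l+\mathbf 1[a\ne a_t]\big)$. For $t\in\{0,\dots,T-1\}$,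 $l\in\{0,\dots,k\}$, $s\in\mathcal S$, the value $V_\tau(s,l,t)$ is the maximum of $\sum_{t'=t}^{T-1}R(s'_{t'},a'_{t'})$ over action sequences $a'_t,\dots,a'_{T-1}\in\mathcal A$ with $\sum_{t'=t}^{T-1}\mathbf 1[a'_{t'}\ne a_{t'}]\le k-l$, where $s'_t=s$ and $s'_{t'+1}=g_S(s'_{t'},a'_{t'},u_{t'})$. Constants: $K_{u_t}=\max_{a}K_{a,u_t}$, $C=\max_a C_a$, $L_{T-1}=C$, $L_t=C+L_{t+1}K_{u_t}$ for $t\le T-2$. For $l\in\{0,\dots,k\}$ and time $t$, let $\mathcal A'_{l,t}=\{a_t\}$ if $l=k$ and $\mathcal A'_{l,t}=\mathcal A$ if $l<k$. Anchor recursion (defined only for $s\in\mathcal S_\dagger$): $\hat V_\tau(s,l,T-1)=\max_{a\in\mathcal A}R(s,a)$ for $l<k$ and $\hat V_\tau(s,k,T-1)=R(s,a_{T-1})$; for $t=T-2,\dots,0$ and $l=k,\dots,0$, $$\hat V_\tau(s,l,t)=\max_{a\in\mathcal A'_{l,t}}\Big\{R(s,a)+\min_{s_\dagger\in\mathcal S_\dagger}\big\{\hat V_\tau(s_\dagger,l_a,t+1)+L_{t+1}\|s_\dagger-s_a\|\big\}\Big\},$$ where $(s_a,l_a)=F^+_{\tau,t}((s,l),a)$. *)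

theory Defs
  imports "HOL-Analysis.Analysis"
begin

definition noise :: "('s \<Rightarrow> 'a \<Rightarrow> 's \<Rightarrow> 'u) \<Rightarrow> (nat \<Rightarrow> 's) \<Rightarrow> (nat \<Rightarrow> 'a) \<Rightarrow> nat \<Rightarrow> 'u" where
  "noise ginv st act t = ginv (st t) (act t) (st (Suc t))"

primrec roll :: "('s \<Rightarrow> 'a \<Rightarrow> 'u \<Rightarrow> 's) \<Rightarrow> (nat \<Rightarrow> 'u) \<Rightarrow> (nat \<Rightarrow> 'a) \<Rightarrow> 's \<Rightarrow> nat \<Rightarrow> nat \<Rightarrow> 's" where
  "roll g u b s t 0 = s"
| "roll g u b s t (Suc j) = g (roll g u b s t j) (b (t + j)) (u (t + j))"

definition Vtrue ::
  "('s \<Rightarrow> 'a \<Rightarrow> 'u \<Rightarrow> 's) \<Rightarrow> ('s \<Rightarrow> 'a \<Rightarrow> 's \<Rightarrow> 'u) \<Rightarrow> ('s \<Rightarrow> 'a \<Rightarrow> real) \<Rightarrow>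
   nat \<Rightarrow> nat \<Rightarrow> (nat \<Rightarrow> 's) \<Rightarrow> (nat \<Rightarrow> 'a) \<Rightarrow> 's \<Rightarrow> nat \<Rightarrow> nat \<Rightarrow> real" where
  "Vtrue g ginv R T k st act s l t =
     Max {(\<Sum>j<T - t. R (roll g (noise ginv st act) b s t j) (b (t + j))) | b.
            (\<Sum>j<T - t. (if b (t + j) \<noteq> act (t + j) then 1 else 0 :: nat)) \<le> k - l}"

definition Ku :: "('a::finite \<Rightarrow> 'u \<Rightarrow> real) \<Rightarrow> (nat \<Rightarrow> 'u) \<Rightarrow> nat \<Rightarrow> real" where
  "Ku K u t = Max (range (\<lambda>a. K a (u t)))"

text \<open>Lrem m = L_{T-1-m}: L_{T-1} = C, L_t = C + L_{t+1} K_{u_t}, with C = max_a C_a.\<close>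
primrec Lrem :: "('a::finite \<Rightarrow> 'u \<Rightarrow> real) \<Rightarrow> ('a \<Rightarrow> real) \<Rightarrow> (nat \<Rightarrow> 'u) \<Rightarrow> nat \<Rightarrow> nat \<Rightarrow> real" where
  "Lrem K Cf u T 0 = Max (range Cf)"
| "Lrem K Cf u T (Suc m) = Max (range Cf) + Lrem K Cf u T m * Ku K u (T - 2 - m)"

definition Lconst :: "('a::finite \<Rightarrow> 'u \<Rightarrow> real) \<Rightarrow> ('a \<Rightarrow> real) \<Rightarrow> (nat \<Rightarrow> 'u) \<Rightarrow> nat \<Rightarrow> nat \<Rightarrow> real" where
  "Lconst K Cf u T t = Lrem K Cf u T (T - 1 - t)"

definition Aset :: "nat \<Rightarrow> (nat \<Rightarrow> 'a) \<Rightarrow> nat \<Rightarrow> nat \<Rightarrow> 'a set" where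
  "Aset k act l t = (if l = k then {act t} else UNIV)"

text \<open>Anchor recursion, indexed by the number m of remaining steps (time t = T-1-m).\<close>
primrec Vrem ::
  "('s::real_normed_vector \<Rightarrow> 'a::finite \<Rightarrow> 'u \<Rightarrow> 's) \<Rightarrow> ('s \<Rightarrow> 'a \<Rightarrow> real) \<Rightarrow>
   ('a \<Rightarrow> 'u \<Rightarrow> real) \<Rightarrow> ('a \<Rightarrow> real) \<Rightarrow> (nat \<Rightarrow> 'u) \<Rightarrow> nat \<Rightarrow> nat \<Rightarrow> (nat \<Rightarrow> 'a) \<Rightarrow>
   's set \<Rightarrow> nat \<Rightarrow> 's \<Rightarrow> nat \<Rightarrow> real" where
  "Vrem g R K Cf u T k act Sd 0 s l =
     (if l < k then Max (range (R s)) else R s (act (T - 1)))"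
| "Vrem g R K Cf u T k act Sd (Suc m) s l =
     (let t = T - 2 - m in
      Max ((\<lambda>a. R s a + Min ((\<lambda>sd. Vrem g R K Cf u T k act Sd m sd
                                        (l + (if a \<noteq> act t then 1 else 0))
                                   + Lconst K Cf u T (Suc t) * norm (sd - g s a (u t))) ` Sd))
           ` Aset k act l t))"

definition Vhat ::
  "('s::real_normed_vector \<Rightarrow> 'a::finite \<Rightarrow> 'u \<Rightarrow> 's) \<Rightarrow> ('s \<Rightarrow> 'a \<Rightarrow> 's \<Rightarrow> 'u) \<Rightarrow>
   ('s \<Rightarrow> 'a \<Rightarrow> real) \<Rightarrow> ('a \<Rightarrow> 'u \<Rightarrow> real) \<Rightarrow> ('a \<Rightarrow> real) \<Rightarrow> nat \<Rightarrow> nat \<Rightarrow>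
   (nat \<Rightarrow> 's) \<Rightarrow> (nat \<Rightarrow> 'a) \<Rightarrow> 's set \<Rightarrow> 's \<Rightarrow> nat \<Rightarrow> nat \<Rightarrow> real" where
  "Vhat g ginv R K Cf T k st act Sd s l t =
     Vrem g R K Cf (noise ginv st act) T k act Sd (T - 1 - t) s l"

end

theory Submission
  imports Defs
begin

lemma roll_Suc_shift:
  "roll g u b s t (Suc j) = roll g u b (g s (b t) (u t)) (Suc t) j"
  by (induction j) auto

definition Fs where
  "Fs g u b R m t s = (\<Sum>j<Suc m. R (roll g u b s t j) (b (t + j)))"

lemma Fs_Suc:
  "Fs g u b R (Suc m) t s = R s (b t) + Fs g u b R m (Suc t) (g s (b t) (u t))"
  unfolding Fs_def
  apply (subst sum.lessThan_Suc_shift)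
  apply (simp only: roll_Suc_shift)
  apply simp
  done

lemma Ku_ge: "K a (u t) \<le> Ku (K::'a::finite \<Rightarrow> _) u t"
  unfolding Ku_def by (rule Max_ge) auto

lemma C_ge: "Cf a \<le> Max (range (Cf::'a::finite \<Rightarrow> real))"
  by (rule Max_ge) auto

lemma Ku_nonneg: "(\<And>a u. K a u \<ge> 0) \<Longrightarrow> 0 \<le> Ku (K::'a::finite \<Rightarrow> _) u t"
  using Ku_ge[of K _ u t] by (meson order_trans)

lemma Lrem_nonneg:
  assumes "\<And>a u. K a u \<ge> 0" "\<And>a. Cf a \<ge> 0"
  shows "0 \<le> Lrem (K::'a::finite \<Rightarrow> _) Cf u T m"
proof (induction m)
  case 0
  then show ?case using C_ge[of Cf] assms(2) by (simp, meson order_trans)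
next
  case (Suc m)
  have "0 \<le> Max (range Cf)" using C_ge[of Cf] assms(2) by (meson order_trans)
  moreover have "0 \<le> Ku K u (T - 2 - m)" using Ku_nonneg assms(1) by blast
  ultimately show ?case using Suc by simp
qed

lemma Fs_lip:
  fixes g :: "'s::real_normed_vector \<Rightarrow> 'a::finite \<Rightarrow> 'u \<Rightarrow> 's"
  assumes K0: "\<And>a u. K a u \<ge> 0"
    and Kl: "\<And>a u s s'. norm (g s a u - g s' a u) \<le> K a u * norm (s - s')"
    and C0: "\<And>a. Cf a \<ge> 0"
    and Cl: "\<And>a s s'. \<bar>R s a - R s' a\<bar> \<le> Cf a * norm (s - s')"
  shows "m + t + 1 = T \<Longrightarrow> \<bar>Fs g u b R m t s - Fs g u b R m t s'\<bar> \<le> Lrem K Cf u T m * norm (s - s')"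
proof (induction m arbitrary: t s s')
  case 0
  have "\<bar>R s (b t) - R s' (b t)\<bar> \<le> Cf (b t) * norm (s - s')" by (rule Cl)
  also have "\<dots> \<le> Max (range Cf) * norm (s - s')"
    by (rule mult_right_mono[OF C_ge]) simp
  finally show ?case by (simp add: Fs_def)
next
  case (Suc m)
  define a where "a = b t"
  have tt: "t = T - 2 - m" using Suc.prems by simp
  have IH: "\<bar>Fs g u b R m (Suc t) (g s a (u t)) - Fs g u b R m (Suc t) (g s' a (u t))\<bar>
      \<le> Lrem K Cf u T m * norm (g s a (u t) - g s' a (u t))"
    using Suc.IH Suc.prems by simp
  have L0: "0 \<le> Lrem K Cf u T m" using Lrem_nonneg K0 C0 by blast
  have "norm (g s a (u t) - g s' a (u t)) \<le> Ku K u t * norm (s - s')"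
    using Kl[of s a "u t" s'] mult_right_mono[OF Ku_ge[of K a u t], of "norm (s - s')"]
    by simp
  hence IH2: "\<bar>Fs g u b R m (Suc t) (g s a (u t)) - Fs g u b R m (Suc t) (g s' a (u t))\<bar>
      \<le> Lrem K Cf u T m * (Ku K u t * norm (s - s'))"
    using IH mult_left_mono[OF _ L0] by (meson order_trans)
  have R1: "\<bar>R s a - R s' a\<bar> \<le> Max (range Cf) * norm (s - s')"
    using Cl[of s a s'] mult_right_mono[OF C_ge[of Cf a], of "norm (s - s')"] by simp
  have "\<bar>Fs g u b R (Suc m) t s - Fs g u b R (Suc m) t s'\<bar>
      \<le> \<bar>R s a - R s' a\<bar> + \<bar>Fs g u b R m (Suc t) (g s a (u t)) - Fs g u b R m (Suc t) (g s' a (u t))\<bar>"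
    unfolding Fs_Suc a_def by linarith
  also have "\<dots> \<le> Max (range Cf) * norm (s - s') + Lrem K Cf u T m * (Ku K u t * norm (s - s'))"
    using R1 IH2 by linarith
  also have "\<dots> = Lrem K Cf u T (Suc m) * norm (s - s')"
    using tt by (simp add: algebra_simps)
  finally show ?case .
qed

lemma main_ind:
  fixes g :: "'s::real_normed_vector \<Rightarrow> 'a::finite \<Rightarrow> 'u \<Rightarrow> 's"
  assumes K0: "\<And>a u. K a u \<ge> 0"
    and Kl: "\<And>a u s s'. norm (g s a u - g s' a u) \<le> K a u * norm (s - s')"
    and C0: "\<And>a. Cf a \<ge> 0"
    and Cl: "\<And>a s s'. \<bar>R s a - R s' a\<bar> \<le> Cf a * norm (s - s')"
    and fin: "finite Sd" and ne: "Sd \<noteq> {}"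
  shows "m + t + 1 = T \<Longrightarrow> s \<in> Sd \<Longrightarrow> l \<le> k \<Longrightarrow>
    (\<Sum>j<Suc m. (if b (t + j) \<noteq> act (t + j) then 1 else 0 :: nat)) \<le> k - l \<Longrightarrow>
    Fs g u b R m t s \<le> Vrem g R K Cf u T k act Sd m s l"
proof (induction m arbitrary: t s l)
  case 0
  show ?case
  proof (cases "l < k")
    case True
    then show ?thesis using Max_ge[of "range (R s)" "R s (b t)"] by (simp add: Fs_def)
  next
    case False
    with 0 have "b t = act t" "t = T - 1" by (auto split: if_splits)
    with False show ?thesis by (simp add: Fs_def)
  qed
next
  case (Suc m)
  define a where "a = b t"
  define la where "la = l + (if a \<noteq> act t then 1 else 0)"
  have tt: "T - 2 - m = t" using Suc.prems by simp
  have cost: "(\<Sum>j<Suc (Suc m). (if b (t + j) \<noteq> act (t + j) then 1 else 0 :: nat))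
     = (if a \<noteq> act t then 1 else 0) + (\<Sum>j<Suc m. (if b (Suc t + j) \<noteq> act (Suc t + j) then 1 else 0 :: nat))"
    unfolding a_def by (subst sum.lessThan_Suc_shift) simp
  have aA: "a \<in> Aset k act l t"
  proof (cases "l = k")
    case True
    with Suc.prems(4) cost have "a = act t" by (auto split: if_splits)
    then show ?thesis by (simp add: Aset_def)
  qed (simp add: Aset_def)
  have lak: "la \<le> k" using Suc.prems(3,4) cost unfolding la_def by (auto split: if_splits)
  have cost2: "(\<Sum>j<Suc m. (if b (Suc t + j) \<noteq> act (Suc t + j) then 1 else 0 :: nat)) \<le> k - la"
    using Suc.prems(4) cost unfolding la_def by (auto split: if_splits)
  define sa where "sa = g s a (u t)"
  have Lc: "Lconst K Cf u T (Suc t) = Lrem K Cf u T m"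
    proof -
    have "T - 1 - Suc t = m" using Suc.prems(1) by simp
    then show ?thesis unfolding Lconst_def by simp
  qed
  have bound: "Fs g u b R m (Suc t) sa \<le> Min ((\<lambda>sd. Vrem g R K Cf u T k act Sd m sd la
       + Lconst K Cf u T (Suc t) * norm (sd - sa)) ` Sd)"
  proof (rule Min.boundedI)
    show "finite ((\<lambda>sd. Vrem g R K Cf u T k act Sd m sd la + Lconst K Cf u T (Suc t) * norm (sd - sa)) ` Sd)"
      using fin by simp
    show "(\<lambda>sd. Vrem g R K Cf u T k act Sd m sd la + Lconst K Cf u T (Suc t) * norm (sd - sa)) ` Sd \<noteq> {}"
      using ne by simp
  next
    fix x assume "x \<in> (\<lambda>sd. Vrem g R K Cf u T k act Sd m sd la + Lconst K Cf u T (Suc t) * norm (sd - sa)) ` Sd"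
    then obtain sd where sd: "sd \<in> Sd" and x: "x = Vrem g R K Cf u T k act Sd m sd la + Lconst K Cf u T (Suc t) * norm (sd - sa)"
      by auto
    have "\<bar>Fs g u b R m (Suc t) sa - Fs g u b R m (Suc t) sd\<bar> \<le> Lrem K Cf u T m * norm (sa - sd)"
      by (rule Fs_lip[OF K0 Kl C0 Cl, where m=m and t="Suc t" and T=T and u=u and b=b and s=sa and s'=sd]) (use Suc.prems(1) in simp)
    moreover have "Fs g u b R m (Suc t) sd \<le> Vrem g R K Cf u T k act Sd m sd la"
      using Suc.IH[of "Suc t" sd la] Suc.prems(1) sd lak cost2 by simp
    ultimately show "Fs g u b R m (Suc t) sa \<le> x" unfolding x Lc
      by (simp add: norm_minus_commute)
  qed
  have "Fs g u b R (Suc m) t s = R s a + Fs g u b R m (Suc t) sa"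
    unfolding Fs_Suc a_def sa_def by simp
  also have "\<dots> \<le> R s a + Min ((\<lambda>sd. Vrem g R K Cf u T k act Sd m sd la
       + Lconst K Cf u T (Suc t) * norm (sd - sa)) ` Sd)"
    using bound by simp
  also have "\<dots> \<le> Vrem g R K Cf u T k act Sd (Suc m) s l"
    unfolding Vrem.simps Let_def tt
    apply (rule Max_ge)
     apply (simp add: Aset_def)
    using aA unfolding la_def sa_def by blast
  finally show ?case .
qed

lemma roll_restrict:
  assumes "i \<le> j" "j < T - t"
  shows "roll g u b s t i = roll g u (restrict b {t..<T}) s t i"
  using assms(1)
proof (induction i)
  case 0 show ?case by simp
next
  case (Suc i)
  have ti: "t + i \<in> {t..<T}" using Suc.prems assms(2) by simp
  have "roll g u b s t i = roll g u (restrict b {t..<T}) s t i" using Suc.IH[OF Suc_leD[OF Suc.prems]] .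
  then show ?case by (simp only: roll.simps restrict_apply'[OF ti])
qed

theorem proposition1:
  fixes g :: "real^'d \<Rightarrow> 'a::finite \<Rightarrow> 'u \<Rightarrow> real^'d"
    and ginv :: "real^'d \<Rightarrow> 'a \<Rightarrow> real^'d \<Rightarrow> 'u"
    and R :: "real^'d \<Rightarrow> 'a \<Rightarrow> real"
    and K :: "'a \<Rightarrow> 'u \<Rightarrow> real"
    and Cf :: "'a \<Rightarrow> real"
    and T k :: nat
    and st :: "nat \<Rightarrow> real^'d"
    and act :: "nat \<Rightarrow> 'a"
    and Sd :: "(real^'d) set"
  assumes "T \<ge> 2" and "k \<le> T"
    and "\<And>s a. bij (g s a)"
    and "\<And>s a u s'. s' = g s a u \<Longrightarrow> u = ginv s a s'"
    and "\<And>a u. K a u \<ge> 0"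
    and "\<And>a u s s'. norm (g s a u - g s' a u) \<le> K a u * norm (s - s')"
    and "\<And>a. Cf a \<ge> 0"
    and "\<And>a s s'. \<bar>R s a - R s' a\<bar> \<le> Cf a * norm (s - s')"
    and "finite Sd" and "Sd \<noteq> {}"
    and "s \<in> Sd" and "l \<le> k" and "t < T"
  shows "Vhat g ginv R K Cf T k st act Sd s l t \<ge> Vtrue g ginv R T k st act s l t"
proof -
  define u where "u = noise ginv st act"
  define m where "m = T - 1 - t"
  have Tt: "T - t = Suc m" using assms(13) unfolding m_def by simp
  define f where "f = (\<lambda>b. \<Sum>j<T - t. R (roll g u b s t j) (b (t + j)))"
  define S where "S = {f b | b. (\<Sum>j<T - t. (if b (t + j) \<noteq> act (t + j) then 1 else 0 :: nat)) \<le> k - l}"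
  have Vt: "Vtrue g ginv R T k st act s l t = Max S"
    unfolding Vtrue_def S_def f_def u_def by simp
  have frest: "f b = f (restrict b {t..<T})" for b
    unfolding f_def
  proof (rule sum.cong[OF refl])
    fix j assume j: "j \<in> {..<T - t}"
    have e1: "roll g u b s t j = roll g u (restrict b {t..<T}) s t j"
      using j by (intro roll_restrict) auto
    have e2: "restrict b {t..<T} (t + j) = b (t + j)"
      using j by (intro restrict_apply') auto
    show "R (roll g u b s t j) (b (t + j)) = R (roll g u (restrict b {t..<T}) s t j) (restrict b {t..<T} (t + j))"
      by (simp only: e1 e2)
  qed
  have "S \<subseteq> f ` (PiE {t..<T} (\<lambda>_. UNIV))"
  proof
    fix x assume "x \<in> S"
    then obtain b where "x = f b" unfolding S_def by auto
    then show "x \<in> f ` (PiE {t..<T} (\<lambda>_. UNIV))"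
      using frest[of b] by (intro image_eqI[of _ _ "restrict b {t..<T}"]) auto
  qed
  moreover have "finite (f ` (PiE {t..<T} (\<lambda>_. UNIV::'a set)))"
    by (intro finite_imageI finite_PiE) auto
  ultimately have finS: "finite S" by (rule finite_subset)
  have "f act \<in> S" unfolding S_def by auto
  hence "S \<noteq> {}" by auto
  with finS have "Max S \<in> S" by (rule Max_in)
  then obtain b where b: "Max S = f b"
    and cb: "(\<Sum>j<T - t. (if b (t + j) \<noteq> act (t + j) then 1 else 0 :: nat)) \<le> k - l"
    unfolding S_def by auto
  have "f b = Fs g u b R m t s" unfolding f_def Fs_def Tt by simp
  also have "\<dots> \<le> Vrem g R K Cf u T k act Sd m s l"
    using main_ind[OF assms(5-10), where m=m and t=t and T=T and s=s and l=l and k=k and b=b and act=act and u=u] cb Tt assms(11,12,13)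
    unfolding m_def by simp
  finally show ?thesis unfolding Vt b Vhat_def u_def m_def by simp
qed

end
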